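(* Let $\Omega\subset\mathbb C$ be a Jordan domain and $A\subset\mathop{\rm clos}\Omega$ a closed connected set such that $\Gamma=A\cap\partial\Omega$ is a simple arc with endpoints $P$ and $Q$. Assume that every point of $\Gamma_o=\Gamma\setminus\{P,Q\}$ has a neighborhood that does not intersect $\mathop{\rm clos}\Omega\setminus A$. Then $\partial A\cap\Omega$ has a connected component whose closure contains both $P$ and $Q$. *)

theory Defs
  imports "HOL-Analysis.Analysis"
begin

definition jordan_domain :: "complex set \<Rightarrow> bool" where
  "jordan_domain \<Omega> \<longleftrightarrow>
     (\<exists>g. simple_path g \<and> pathfinish g = pathstart g \<and> \<Omega> = inside (path_image g))"

end

theory Submission
  imports Defs
begin

lemma split_compact:
  fixes K :: "complex set"
  assumes "compact K"
    and nc: "\<And>C. connected C \<Longrightarrow> C \<subseteq> K \<Longrightarrow> P \<in> C \<Longrightarrow> Q \<in> C \<Longrightarrow> False"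
  obtains K1 K2 where "closed K1" "closed K2" "K = K1 \<union> K2" "K1 \<inter> K2 = {}" "P \<notin> K2" "Q \<notin> K1"
proof -
  have "separated_between (top_of_set K) (K \<inter> {P}) (K \<inter> {Q})"
  proof (rule cut_wire_fence_theorem)
    show "compact_space (top_of_set K)"
      by (simp add: assms(1) compact_space_subtopology)
    show "Hausdorff_space (top_of_set K)"
      by (simp add: Hausdorff_space_subtopology)
    show "closedin (top_of_set K) (K \<inter> {P})" "closedin (top_of_set K) (K \<inter> {Q})"
      by (auto intro: closedin_closed_Int)
    fix C assume "connectedin (top_of_set K) C"
    then have "connected C" "C \<subseteq> K" by (auto simp: connectedin_subtopology)
    then show "disjnt C (K \<inter> {P}) \<or> disjnt C (K \<inter> {Q})"
      using nc by (auto simp: disjnt_def)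
  qed
  then obtain U where U: "closedin (top_of_set K) U" "openin (top_of_set K) U"
    "K \<inter> {P} \<subseteq> U" "K \<inter> {Q} \<subseteq> K - U"
    unfolding separated_between by auto
  have cK: "closed K" by (simp add: assms(1) compact_imp_closed)
  have "closedin (top_of_set K) (K - U)"
    using closedin_diff[OF closedin_topspace U(2)] by simp
  then have "closed (K - U)" using cK closedin_closed_trans by blast
  moreover have "closed U" using U(1) cK closedin_closed_trans by blast
  moreover have "U \<subseteq> K" using U(1) closedin_imp_subset by blast
  ultimately show ?thesis
  proof (intro that[of U "K - U"])
    show "K = U \<union> (K - U)" using \<open>U \<subseteq> K\<close> by blast
    show "P \<notin> K - U" using U(3) by blast
    show "Q \<notin> U" using U(4) \<open>U \<subseteq> K\<close> by blast
  qed auto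
qed

lemma irreducible_continuum_exists:
  fixes Y C0 :: "complex set"
  assumes "compact Y" "connected C0" "C0 \<subseteq> Y" "P \<in> C0" "Q \<in> C0"
  obtains M where "compact M" "connected M" "M \<subseteq> Y" "P \<in> M" "Q \<in> M"
    "\<And>M'. compact M' \<Longrightarrow> connected M' \<Longrightarrow> M' \<subseteq> M \<Longrightarrow> P \<in> M' \<Longrightarrow> Q \<in> M' \<Longrightarrow> M' = M"
proof -
  define F where "F = {M. compact M \<and> connected M \<and> M \<subseteq> Y \<and> P \<in> M \<and> Q \<in> M}"
  have cC0: "closure C0 \<in> F"
    using assms unfolding F_def
    by (auto simp: compact_imp_closed closure_minimal connected_imp_connected_closure
        intro: compact_closure[THEN iffD2] bounded_subset compact_imp_bounded closure_subset[THEN subsetD])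
  have "\<exists>M\<in>uminus ` F. \<forall>X\<in>uminus ` F. M \<subseteq> X \<longrightarrow> X = M"
  proof (rule subset_Zorn)
    fix C assume ch: "subset.chain (uminus ` F) C"
    show "\<exists>U\<in>uminus ` F. \<forall>X\<in>C. X \<subseteq> U"
    proof (cases "C = {}")
      case True then show ?thesis using cC0 by blast
    next
      case False
      then obtain X0 where X0: "X0 \<in> C" by blast
      have CF: "C \<subseteq> uminus ` F" and lin: "\<And>x y. x \<in> C \<Longrightarrow> y \<in> C \<Longrightarrow> x \<subseteq> y \<or> y \<subseteq> x"
        using ch by (auto simp: subset_chain_def)
      define G where "G = uminus ` C"
      have GF: "G \<subseteq> F" using CF unfolding G_def by auto
      have "\<Inter>G \<in> F"
      proof -
        have "-X0 \<in> G" "compact (-X0)" using X0 GF unfolding G_def F_def by auto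
        have conn: "connected (\<Inter>G)"
        proof (rule connected_chain_gen[OF \<open>-X0 \<in> G\<close> \<open>compact (-X0)\<close>])
          show "\<And>T. T \<in> G \<Longrightarrow> closed T \<and> connected T"
            using GF unfolding F_def by (auto simp: compact_imp_closed)
          show "\<And>S T. S \<in> G \<and> T \<in> G \<Longrightarrow> S \<subseteq> T \<or> T \<subseteq> S"
            using lin unfolding G_def by blast
        qed
        have cl: "closed (\<Inter>G)"
          using GF unfolding F_def by (intro closed_Inter) (auto simp: compact_imp_closed)
        have "\<Inter>G = (-X0) \<inter> \<Inter>G" using \<open>-X0 \<in> G\<close> by blast
        then have "compact (\<Inter>G)"
          using compact_Int_closed[OF \<open>compact (-X0)\<close> cl] by simp
        then show ?thesis using conn GF \<open>-X0 \<in> G\<close> unfolding F_def by auto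
      qed
      moreover have "\<Union>C = - \<Inter>G" unfolding G_def by auto
      ultimately show ?thesis by (metis Union_upper image_eqI)
    qed
  qed
  then obtain M where M: "M \<in> F" and max: "\<And>X. X \<in> F \<Longrightarrow> -M \<subseteq> -X \<Longrightarrow> -X = -M"
    by auto
  show ?thesis
  proof (rule that)
    show "compact M" "connected M" "M \<subseteq> Y" "P \<in> M" "Q \<in> M" using M unfolding F_def by auto
    fix M' assume "compact M'" "connected M'" "M' \<subseteq> M" "P \<in> M'" "Q \<in> M'"
    then have "M' \<in> F" using \<open>M \<subseteq> Y\<close> unfolding F_def by auto
    then show "M' = M" using max \<open>M' \<subseteq> M\<close> by auto
  qed
qed

lemma irreducible_minus_connected:
  fixes M :: "complex set"
  assumes "compact M" "connected M" "P \<in> M" "Q \<in> M" "P \<noteq> Q"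
    and min: "\<And>M'. compact M' \<Longrightarrow> connected M' \<Longrightarrow> M' \<subseteq> M \<Longrightarrow> P \<in> M' \<Longrightarrow> Q \<in> M' \<Longrightarrow> M' = M"
  shows "connected (M - {P,Q})"
proof (rule ccontr)
  let ?T = "M - {P,Q}"
  have cM: "closed M" by (simp add: assms(1) compact_imp_closed)
  have split: "\<exists>K1 K2. closed K1 \<and> closed K2 \<and> K = K1 \<union> K2 \<and> K1 \<inter> K2 = {} \<and> P \<notin> K2 \<and> Q \<notin> K1"
    if "closed K" "K \<subseteq> M" "K \<noteq> M" for K
  proof -
    have "compact K" using that assms(1) compact_Int_closed[of M K] by (simp add: Int_absorb1)
    have nc: "\<And>C. connected C \<Longrightarrow> C \<subseteq> K \<Longrightarrow> P \<in> C \<Longrightarrow> Q \<in> C \<Longrightarrow> False"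
    proof -
      fix C assume that: "connected C" "C \<subseteq> K" "P \<in> C" "Q \<in> C"
      have cCK: "closure C \<subseteq> K" using \<open>closed K\<close> \<open>C \<subseteq> K\<close> closure_minimal by blast
      then have eq: "K \<inter> closure C = closure C" by blast
      have "compact (closure C)"
        using compact_Int_closed[OF \<open>compact K\<close> closed_closure[of C]] unfolding eq .
      moreover have "connected (closure C)" using that(1) connected_imp_connected_closure by blast
      moreover have "P \<in> closure C" "Q \<in> closure C" using that closure_subset by blast+
      ultimately have "closure C = M"
        using min[of "closure C"] cCK \<open>K \<subseteq> M\<close> by blast
      then show False using cCK \<open>K \<subseteq> M\<close> \<open>K \<noteq> M\<close> by blast
    qed
    obtain K1 K2 where "closed K1" "closed K2" "K = K1 \<union> K2" "K1 \<inter> K2 = {}" "P \<notin> K2" "Q \<notin> K1"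
      by (rule split_compact[of K P Q, OF \<open>compact K\<close> nc])
    then show ?thesis by blast
  qed
  assume "\<not> connected ?T"
  then obtain E1 E2 where E: "closedin (top_of_set ?T) E1" "closedin (top_of_set ?T) E2"
    "?T \<subseteq> E1 \<union> E2" "E1 \<inter> E2 = {}" "E1 \<noteq> {}" "E2 \<noteq> {}"
    unfolding connected_closedin_eq by blast
  have E1T: "E1 \<subseteq> ?T" "E2 \<subseteq> ?T" using E closedin_imp_subset by blast+
  have clT1: "closure E1 \<inter> ?T \<subseteq> E1"
  proof -
    obtain F where "closed F" "E1 = ?T \<inter> F" using E(1) closedin_closed by blast
    then show ?thesis using closure_minimal[of E1 F] by auto
  qed
  have clT2: "closure E2 \<inter> ?T \<subseteq> E2"
  proof -
    obtain F where "closed F" "E2 = ?T \<inter> F" using E(2) closedin_closed by blast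
    then show ?thesis using closure_minimal[of E2 F] by auto
  qed
  have cl1M: "closure E1 \<subseteq> M" and cl2M: "closure E2 \<subseteq> M"
    using E1T cM closure_minimal by blast+
  have "closure E1 \<noteq> M"
    using clT1 E1T E(4) E(5-6) by auto
  then obtain U1 U2 where U: "closed U1" "closed U2" "closure E1 = U1 \<union> U2" "U1 \<inter> U2 = {}" "P \<notin> U2" "Q \<notin> U1"
    using split[of "closure E1"] cl1M by blast
  have "closure E2 \<noteq> M"
    using clT2 E1T E(4) E(5-6) by auto
  then obtain V1 V2 where V: "closed V1" "closed V2" "closure E2 = V1 \<union> V2" "V1 \<inter> V2 = {}" "P \<notin> V2" "Q \<notin> V1"
    using split[of "closure E2"] cl2M by blast
  have inter: "closure E1 \<inter> closure E2 \<subseteq> {P,Q}"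
    using clT1 clT2 cl1M cl2M E(4) by blast
  let ?A = "U1 \<union> V1 \<union> {P}" and ?B = "U2 \<union> V2 \<union> {Q}"
  have "closed ?A" using U(1) V(1) by (intro closed_Un) auto
  moreover have "closed ?B" using U(2) V(2) by (intro closed_Un) auto
  moreover have "M \<subseteq> ?A \<union> ?B"
    using E(3) closure_subset[of E1] closure_subset[of E2] U(3) V(3) by blast
  moreover have "?A \<inter> ?B = {}"
    using U V inter assms(5) by blast
  moreover have "?A \<inter> M \<noteq> {}" "?B \<inter> M \<noteq> {}" using assms by auto
  ultimately have "\<exists>A B. closed A \<and> closed B \<and> M \<subseteq> A \<union> B \<and> A \<inter> B \<inter> M = {} \<and> A \<inter> M \<noteq> {} \<and> B \<inter> M \<noteq> {}"
    by (intro exI[of _ ?A] exI[of _ ?B]) simp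
  then show False using assms(2) unfolding connected_closed by (elim notE)
qed

theorem lemma4p5:
  fixes \<Omega> A :: "complex set" and \<gamma> :: "real \<Rightarrow> complex" and P Q :: complex
  assumes "jordan_domain \<Omega>"
    and "closed A" and "connected A" and "A \<subseteq> closure \<Omega>"
    and "arc \<gamma>" and "path_image \<gamma> = A \<inter> frontier \<Omega>"
    and "pathstart \<gamma> = P" and "pathfinish \<gamma> = Q"
    and "\<And>z. z \<in> (A \<inter> frontier \<Omega>) - {P, Q} \<Longrightarrow>
            \<exists>U. open U \<and> z \<in> U \<and> U \<inter> (closure \<Omega> - A) = {}"
  shows "\<exists>C \<in> components (frontier A \<inter> \<Omega>). P \<in> closure C \<and> Q \<in> closure C"
proof -
  obtain g where g: "simple_path g" "pathfinish g = pathstart g" and Om: "\<Omega> = inside (path_image g)"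
    using assms(1) unfolding jordan_domain_def by blast
  define J where "J = path_image g"
  define Out where "Out = outside J"
  have JIO: "open \<Omega>" "connected \<Omega>" "bounded \<Omega>" "frontier \<Omega> = J" "open Out" "connected Out"
    "frontier Out = J" "\<Omega> \<inter> Out = {}" "\<Omega> \<union> Out = - J"
    using Jordan_inside_outside[OF g] unfolding Om J_def Out_def by auto
  have clOm: "closure \<Omega> = \<Omega> \<union> J" using closure_Un_frontier[of \<Omega>] JIO by simp
  have clOut: "closure Out = Out \<union> J" using closure_Un_frontier[of Out] JIO by simp
  have Out_clOm: "closure Out \<inter> \<Omega> = {}" using clOut JIO by blast
  have compl_clOut: "- closure Out = \<Omega>" using clOut JIO by blast
  define G where "G = path_image \<gamma>"
  have AJ: "A \<inter> J = G" using assms(6) JIO unfolding G_def by simp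
  have PQ: "P \<noteq> Q" using arc_distinct_ends[OF assms(5)] assms(7,8) by simp
  have PG: "P \<in> G" "Q \<in> G" using assms(7,8) unfolding G_def
    by (auto intro: pathstart_in_path_image pathfinish_in_path_image)
  define S where "S = frontier A \<inter> \<Omega>"
  have frA: "frontier A \<subseteq> A" using assms(2) by (simp add: frontier_subset_closed)
  have SA: "S \<subseteq> A" "S \<subseteq> \<Omega>" using frA unfolding S_def by auto
  have hyp: "\<exists>r>0. ball z r \<inter> S = {} \<and> P \<notin> ball z r \<and> Q \<notin> ball z r \<and> ball z r \<inter> \<Omega> \<subseteq> interior A"
    if z: "z \<in> G - {P,Q}" for z
  proof -
    obtain U where U: "open U" "z \<in> U" "U \<inter> (closure \<Omega> - A) = {}"
      using assms(9)[of z] z AJ JIO by auto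
    obtain r1 where r1: "r1 > 0" "ball z r1 \<subseteq> U" using U open_contains_ball by blast
    define r where "r = min r1 (min (dist z P) (dist z Q))"
    have r: "r > 0" using r1 z unfolding r_def by auto
    have PQb: "P \<notin> ball z r" "Q \<notin> ball z r" unfolding r_def by auto
    have "ball z r \<subseteq> U" using r1 unfolding r_def by auto
    then have "ball z r \<inter> \<Omega> \<subseteq> A" using U(3) closure_subset[of \<Omega>] by blast
    then have int: "ball z r \<inter> \<Omega> \<subseteq> interior A"
      using JIO(1) by (simp add: interior_maximal open_Int)
    have "ball z r \<inter> S = {}"
      using int unfolding S_def frontier_def by auto
    then show ?thesis using r PQb int by blast
  qed
  have clS: "closure S \<subseteq> S \<union> {P,Q}"
  proof
    fix x assume x: "x \<in> closure S"
    have "closure S \<subseteq> A" using frA SA(1) assms(2) closure_minimal by blast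
    moreover have "closure S \<subseteq> \<Omega> \<union> J" using SA(2) clOm closure_mono by blast
    ultimately have xA: "x \<in> A" "x \<in> \<Omega> \<union> J" using x by auto
    show "x \<in> S \<union> {P,Q}"
    proof (rule ccontr)
      assume nx: "x \<notin> S \<union> {P,Q}"
      have "closure S \<subseteq> frontier A"
        using closure_minimal[of S "frontier A"] frontier_closed[of A] unfolding S_def by blast
      then have "x \<notin> \<Omega>" using x nx unfolding S_def by blast
      then have "x \<in> G - {P,Q}" using xA AJ nx by auto
      then obtain r where "r > 0" "ball x r \<inter> S = {}" using hyp by blast
      then have "ball x r \<inter> closure S = {}" by (simp add: open_Int_closure_eq_empty)
      then show False using x \<open>r > 0\<close> centre_in_ball[of x r] by blast
    qed
  qed
  define Y where "Y = S \<union> {P,Q}"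
  have YA: "Y \<subseteq> A" using SA PG AJ unfolding Y_def by auto
  have Yeq: "Y = closure S \<union> {P,Q}" using clS closure_subset[of S] unfolding Y_def by blast
  have "closed Y" unfolding Yeq by (simp add: closed_Un)
  moreover have "bounded Y"
  proof -
    have "Y \<subseteq> closure \<Omega>" using YA assms(4) by blast
    then show ?thesis using JIO(3) bounded_closure bounded_subset by blast
  qed
  ultimately have cY: "compact Y" by (simp add: compact_eq_bounded_closed)
  have YclOut: "Y \<inter> closure Out \<subseteq> {P,Q}" using SA Out_clOm unfolding Y_def by blast
  define z where "z = \<gamma> (1/2)"
  have z: "z \<in> G - {P,Q}"
  proof -
    have inj: "inj_on \<gamma> {0..1}" using assms(5) by (simp add: arc_def)
    have "\<gamma> (1/2) \<noteq> \<gamma> 0" "\<gamma> (1/2) \<noteq> \<gamma> 1"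
      using inj_onD[OF inj, of "1/2" 0] inj_onD[OF inj, of "1/2" 1] by auto
    moreover have "\<gamma> (1/2) \<in> G" unfolding G_def path_image_def by auto
    ultimately show ?thesis using assms(7,8) unfolding z_def pathstart_def pathfinish_def by auto
  qed
  obtain r where r: "r > 0" "ball z r \<inter> S = {}" "P \<notin> ball z r" "Q \<notin> ball z r" "ball z r \<inter> \<Omega> \<subseteq> interior A"
    using hyp[OF z] by blast
  have zJ: "z \<in> J" using z AJ by auto
  have "ball z r \<inter> \<Omega> \<noteq> {}"
  proof -
    have "z \<in> closure \<Omega>" using zJ clOm by auto
    then have "ball z r \<inter> closure \<Omega> \<noteq> {}" using r(1) centre_in_ball[of z r] by blast
    then show ?thesis by (simp add: open_Int_closure_eq_empty)
  qed
  then obtain a where a: "a \<in> ball z r" "a \<in> \<Omega>" by blast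
  have aint: "a \<in> interior A" using a r(5) by blast
  have zOut: "ball z r \<inter> Out \<noteq> {}"
  proof -
    have "z \<in> closure Out" using zJ clOut by auto
    then have "ball z r \<inter> closure Out \<noteq> {}" using r(1) centre_in_ball[of z r] by blast
    then show ?thesis by (simp add: open_Int_closure_eq_empty)
  qed
  obtain s where s: "s \<in> J" "s \<notin> G"
  proof -
    have "\<not> J \<subseteq> G"
    proof
      assume "J \<subseteq> G"
      then have "J = G" using AJ by blast
      moreover have "connected (- G)" unfolding G_def
        by (rule connected_arc_complement[OF assms(5)]) simp
      moreover have "\<not> connected (- J)" unfolding J_def by (rule Jordan_disconnected[OF g])
      ultimately show False by simp
    qed
    then show ?thesis using that by blast
  qed
  have "s \<notin> A" using s AJ by blast
  then obtain r2 where r2: "r2 > 0" "ball s r2 \<subseteq> - A"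
    using assms(2) open_contains_ball[of "- A"] by (auto simp: closed_def)
  have "ball s r2 \<inter> \<Omega> \<noteq> {}"
  proof -
    have "s \<in> closure \<Omega>" using s clOm by auto
    then have "ball s r2 \<inter> closure \<Omega> \<noteq> {}" using r2(1) centre_in_ball[of s r2] by blast
    then show ?thesis by (simp add: open_Int_closure_eq_empty)
  qed
  then obtain b where b: "b \<in> ball s r2" "b \<in> \<Omega>" by blast
  have bA: "b \<notin> A" using b r2 by blast
  have sOut: "ball s r2 \<inter> Out \<noteq> {}"
  proof -
    have "s \<in> closure Out" using s clOut by auto
    then have "ball s r2 \<inter> closure Out \<noteq> {}" using r2(1) centre_in_ball[of s r2] by blast
    then show ?thesis by (simp add: open_Int_closure_eq_empty)
  qed
  define C0 where "C0 = ball z r \<union> Out \<union> ball s r2"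
  have conC0: "connected C0" unfolding C0_def
    using zOut sOut JIO(6)
    by (metis Int_Un_distrib2 Un_empty connected_Un connected_ball inf_commute)
  have C0Y: "C0 \<inter> Y = {}"
  proof -
    have "ball z r \<inter> Y = {}" using r unfolding Y_def by auto
    moreover have "Out \<inter> Y = {}" using YclOut closure_subset[of Out] PG AJ JIO unfolding Y_def
      using SA(2) by auto
    moreover have "ball s r2 \<inter> Y = {}" using r2 YA by auto
    ultimately show ?thesis unfolding C0_def by blast
  qed
  have abC0: "a \<in> C0" "b \<in> C0" using a b unfolding C0_def by auto
  have ccX: "connected_component (- X) a b" if "X \<subseteq> Y" for X
    unfolding connected_component_def using conC0 C0Y abC0 that by blast
  have ccOut: "connected_component (- closure Out) a b"
    unfolding connected_component_def compl_clOut using JIO(2) a b by blast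
  have sep: "\<not> connected_component (- (Y \<union> closure Out)) a b"
  proof
    assume "connected_component (- (Y \<union> closure Out)) a b"
    then obtain T where T: "connected T" "T \<subseteq> - (Y \<union> closure Out)" "a \<in> T" "b \<in> T"
      unfolding connected_component_def by blast
    have "T \<subseteq> \<Omega> - S" using T(2) compl_clOut unfolding Y_def by blast
    then have "T \<subseteq> interior A \<union> - A"
      using assms(2) unfolding S_def frontier_def by (auto simp: closure_closed)
    moreover have "interior A \<inter> - A \<inter> T = {}" using interior_subset by blast
    ultimately have "interior A \<inter> T = {} \<or> - A \<inter> T = {}"
      using connectedD[OF T(1) open_interior, of "- A"] assms(2) by (auto simp: closed_def)
    then show False using T aint bA by blast
  qed
  have "\<exists>C. connected C \<and> C \<subseteq> Y \<and> P \<in> C \<and> Q \<in> C"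
  proof (rule ccontr)
    assume "\<not> ?thesis"
    then have nc: "\<And>C. connected C \<Longrightarrow> C \<subseteq> Y \<Longrightarrow> P \<in> C \<Longrightarrow> Q \<in> C \<Longrightarrow> False" by blast
    obtain X1 X2 where X: "closed X1" "closed X2" "Y = X1 \<union> X2" "X1 \<inter> X2 = {}" "P \<notin> X2" "Q \<notin> X1"
      by (rule split_compact[of Y P Q, OF cY nc])
    have e1: "Y \<inter> X1 = X1" "Y \<inter> X2 = X2" using X(3) by blast+
    have cX1: "compact X1" using compact_Int_closed[OF cY X(1)] unfolding e1 .
    have cX2: "compact X2" using compact_Int_closed[OF cY X(2)] unfolding e1 .
    have "X2 \<inter> closure Out \<subseteq> {Q}" using YclOut X by blast
    then have con2: "connected (X2 \<inter> closure Out)"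
      using subset_singletonD by fastforce
    have cc2: "connected_component (- (X2 \<union> closure Out)) a b"
      by (rule Janiszewski[OF cX2 closed_closure con2 ccX ccOut]) (use X in blast)
    have "X1 \<inter> (X2 \<union> closure Out) \<subseteq> {P}" using YclOut X by blast
    then have con1: "connected (X1 \<inter> (X2 \<union> closure Out))"
      using subset_singletonD by fastforce
    have "connected_component (- (X1 \<union> (X2 \<union> closure Out))) a b"
      by (rule Janiszewski[OF cX1 _ con1 ccX cc2]) (use X in auto)
    then show False using sep X(3) by (simp add: Un_assoc)
  qed
  then obtain C1 where C1: "connected C1" "C1 \<subseteq> Y" "P \<in> C1" "Q \<in> C1" by blast
  obtain M where M: "compact M" "connected M" "M \<subseteq> Y" "P \<in> M" "Q \<in> M"
    and min: "\<And>M'. compact M' \<Longrightarrow> connected M' \<Longrightarrow> M' \<subseteq> M \<Longrightarrow> P \<in> M' \<Longrightarrow> Q \<in> M' \<Longrightarrow> M' = M"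
    by (rule irreducible_continuum_exists[OF cY C1]) blast
  have conM': "connected (M - {P,Q})"
    by (rule irreducible_minus_connected[OF M(1,2,4,5) PQ min])
  have lim: "x islimpt (M - {P,Q})" if "x \<in> M" for x
  proof -
    have "x islimpt M"
      by (rule connected_imp_perfect[OF M(2) that]) (use M PQ in blast)
    moreover have "M = {P,Q} \<union> (M - {P,Q})" using M by blast
    ultimately show ?thesis by (metis finite.emptyI finite.insertI islimpt_Un_finite)
  qed
  have PQcl: "P \<in> closure (M - {P,Q})" "Q \<in> closure (M - {P,Q})"
    using lim M unfolding closure_def by auto
  have "M - {P,Q} \<noteq> {}" using lim[OF M(4)] by (auto simp: islimpt_def)
  then obtain x where x: "x \<in> M - {P,Q}" by blast
  have MS: "M - {P,Q} \<subseteq> S" using M(3) unfolding Y_def by blast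
  have "connected_component_set S x \<in> components S" using x MS by (blast intro: componentsI)
  moreover have "M - {P,Q} \<subseteq> connected_component_set S x"
    by (rule connected_component_maximal[OF x conM' MS])
  ultimately show ?thesis using PQcl closure_mono unfolding S_def by blast
qed

end
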